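(* Let $V$ be a real vector space of odd finite dimension, $G\le\mathrm{GL}(V)$ a finite group such that $V$ is a non-trivial irreducible $\mathbb{R}G$-module and $-\mathrm{id}_V\notin G$, and let $n\in N_{\mathrm{GL}(V)}(G)$ have finite order. Let $\nu=\mathrm{ad}_n\in\mathrm{Aut}(G)$, $G'=\langle\mathrm{Inn}(G),\nu\rangle\le\mathrm{Aut}(G)$, and let $\chi'$ be the character of $G'$ defined below. Suppose there is $g\in G$ such that $\alpha:=\mathrm{ad}_g\circ\nu$ has even order and the restriction of $\chi'$ to the cyclic group $\langle\alpha\rangle$ has positive scalar product with every real-valued irreducible character of $\langle\alpha\rangle$ (i.e. with the trivial character and with the linear character sending $\alpha$ to $-1$). Then the triple $(G,V,n)$ has the $E1$-property.
   Context: For $x\in N_{\mathrm{GL}(V)}(G)$, $\mathrm{ad}_x\in\mathrm{Aut}(G)$ denotes conjugation $y\mapsto xyx^{-1}$. Put $A=\langle G,n\rangle\le\mathrm{GL}(V)$, and $A'=A$ if $-\mathrm{id}_V\notin A$, $A'=A\cap\mathrm{SL}(V)$ if $-\mathrm{id}_V\in A$. The map $A\to G'$, $gn^i\mapsto\mathrm{ad}_g\circ\nu^i$ ($g\in G$, $i\in\mathbb{Z}$) is a surjective homomorphism restricting to an isomorphism $A'\to G'$; via the inverse of this isomorphism $V$ becomes an $\mathbb{R}G'$-module, and $\chi'$ denotes its character. The triple $(G,V,n)$ has the $E1$-property if there is $g\in G$ such that $gn$ has eigenvalue $1$. *)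

theory Defs
  imports "HOL-Analysis.Analysis"
begin

type_synonym 'n mat = "real ^ 'n ^ 'n"

text \<open>Matrix powers (the componentwise power on vec is NOT matrix power).\<close>
primrec mpow :: "'n::finite mat \<Rightarrow> nat \<Rightarrow> 'n mat" where
  "mpow x 0 = mat 1"
| "mpow x (Suc k) = x ** mpow x k"

definition finite_matrix_group :: "'n::finite mat set \<Rightarrow> bool" where
  "finite_matrix_group G \<longleftrightarrow> finite G \<and> G \<noteq> {} \<and> (\<forall>x\<in>G. invertible x) \<and> mat 1 \<in> G
     \<and> (\<forall>x\<in>G. \<forall>y\<in>G. x ** y \<in> G) \<and> (\<forall>x\<in>G. matrix_inv x \<in> G)"

definition irreducible_module :: "'n::finite mat set \<Rightarrow> bool" where
  "irreducible_module G \<longleftrightarrow>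
     (\<forall>W :: (real ^ 'n) set. subspace W \<and> (\<forall>g\<in>G. \<forall>w\<in>W. g *v w \<in> W) \<longrightarrow> W = {0} \<or> W = UNIV)"

definition trivial_module :: "'n::finite mat set \<Rightarrow> bool" where
  "trivial_module G \<longleftrightarrow> (\<forall>g\<in>G. \<forall>v. g *v v = v)"

definition ad :: "'n::finite mat \<Rightarrow> 'n mat \<Rightarrow> 'n mat" where
  "ad x y = x ** y ** matrix_inv x"

inductive_set gen_group :: "'n::finite mat set \<Rightarrow> 'n mat set" for S where
  one: "mat 1 \<in> gen_group S"
| gen: "x \<in> S \<Longrightarrow> x \<in> gen_group S"
| mult: "x \<in> gen_group S \<Longrightarrow> y \<in> gen_group S \<Longrightarrow> x ** y \<in> gen_group S"
| inv: "x \<in> gen_group S \<Longrightarrow> matrix_inv x \<in> gen_group S"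

definition grpA :: "'n::finite mat set \<Rightarrow> 'n mat \<Rightarrow> 'n mat set" where
  "grpA G n = gen_group (insert n G)"

definition grpA' :: "'n::finite mat set \<Rightarrow> 'n mat \<Rightarrow> 'n mat set" where
  "grpA' G n = (if - mat 1 \<in> grpA G n then {a \<in> grpA G n. det a = 1} else grpA G n)"

text \<open>The character \<chi>' of G': for \<sigma> \<in> G' (an automorphism of G, compared on G),
  \<chi>'(\<sigma>) is the trace of the unique a \<in> A' with ad_a = \<sigma> on G.\<close>
definition chi' :: "'n::finite mat set \<Rightarrow> 'n mat \<Rightarrow> ('n mat \<Rightarrow> 'n mat) \<Rightarrow> real" where
  "chi' G n \<sigma> = trace (THE a. a \<in> grpA' G n \<and> (\<forall>y\<in>G. ad a y = \<sigma> y))"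

definition aut_order :: "'n::finite mat set \<Rightarrow> ('n mat \<Rightarrow> 'n mat) \<Rightarrow> nat" where
  "aut_order G \<alpha> = (LEAST k. k > 0 \<and> (\<forall>y\<in>G. (\<alpha> ^^ k) y = y))"

definition E1_property :: "'n::finite mat set \<Rightarrow> 'n mat \<Rightarrow> bool" where
  "E1_property G n \<longleftrightarrow> (\<exists>g\<in>G. \<exists>v. v \<noteq> 0 \<and> (g ** n) *v v = v)"

end

theory Submission
  imports Defs
begin


lemma minv: assumes "invertible (A::'n::finite mat)"
  shows "A ** matrix_inv A = mat 1" "matrix_inv A ** A = mat 1"
proof -
  have "\<exists>A'. A ** A' = mat 1 \<and> A' ** A = mat 1" using assms unfolding invertible_def by blast
  hence "A ** matrix_inv A = mat 1 \<and> matrix_inv A ** A = mat 1"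
    unfolding matrix_inv_def by (rule someI_ex)
  thus "A ** matrix_inv A = mat 1" "matrix_inv A ** A = mat 1" by auto
qed

lemma minv_unique: assumes "invertible (A::'n::finite mat)" "A ** B = mat 1"
  shows "matrix_inv A = B"
proof -
  have "matrix_inv A = matrix_inv A ** (A ** B)" using assms by simp
  also have "\<dots> = B" by (simp add: matrix_mul_assoc minv(2)[OF assms(1)])
  finally show ?thesis .
qed

lemma minv_invertible: "invertible (A::'n::finite mat) \<Longrightarrow> invertible (matrix_inv A)"
  using minv unfolding invertible_def by blast

lemma inv_one: "invertible (mat 1 :: 'n::finite mat)"
  unfolding invertible_def by (rule exI[of _ "mat 1"]) simp

lemma minv_one: "matrix_inv (mat 1 :: 'n::finite mat) = mat 1"
  by (rule minv_unique[OF inv_one]) simp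

lemma minv_mult: assumes "invertible (A::'n::finite mat)" "invertible (B::'n mat)"
  shows "matrix_inv (A ** B) = matrix_inv B ** matrix_inv A"
proof (rule minv_unique)
  show "invertible (A ** B)" using assms by (rule invertible_mult)
  have "A ** B ** (matrix_inv B ** matrix_inv A) = A ** (B ** matrix_inv B) ** matrix_inv A"
    by (simp add: matrix_mul_assoc)
  thus "A ** B ** (matrix_inv B ** matrix_inv A) = mat 1" using assms by (simp add: minv)
qed

lemma minv_neg: assumes "invertible (A::'n::finite mat)"
  shows "matrix_inv (- A) = - matrix_inv A"
proof (rule minv_unique)
  have "- A = (-1::real) *\<^sub>R A" by simp
  thus "invertible (- A)" using scalar_invertible[OF _ assms, of "-1"] by simp
  have "(-A) ** (- matrix_inv A) = A ** matrix_inv A"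
    by (simp add: matrix_matrix_mult_def vec_eq_iff sum_negf)
  thus "(-A) ** (- matrix_inv A) = mat 1" using minv[OF assms] by simp
qed

lemma det_minv: assumes "invertible (A::'n::finite mat)" shows "det (matrix_inv A) = 1 / det A"
proof -
  have "det A * det (matrix_inv A) = 1" using det_mul[of A "matrix_inv A"] minv[OF assms] by simp
  moreover hence "det A \<noteq> 0" by auto
  ultimately show ?thesis by (simp add: field_simps)
qed

lemma ad_comp: assumes "invertible a" "invertible (b::'n::finite mat)"
  shows "ad a (ad b y) = ad (a ** b) y"
  unfolding ad_def using minv_mult[OF assms] by (simp add: matrix_mul_assoc)

lemma ad_neg: assumes "invertible (a::'n::finite mat)" shows "ad (-a) = ad a"
proof
  fix y show "ad (-a) y = ad a y" unfolding ad_def minv_neg[OF assms]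
    by (simp add: matrix_matrix_mult_def vec_eq_iff sum_negf)
qed

lemma mpow_invertible: "invertible (x::'n::finite mat) \<Longrightarrow> invertible (mpow x k)"
  by (induction k) (auto intro: invertible_mult simp: inv_one)

lemma det_mpow: "det (mpow (x::'n::finite mat) k) = det x ^ k"
  by (induction k) (auto simp: det_mul)

lemma mpow_Suc': "mpow (x::'n::finite mat) (Suc k) = mpow x k ** x"
  by (induction k) (auto simp: matrix_mul_assoc)

lemma funpow_ad: assumes "invertible (x::'n::finite mat)"
  shows "ad x ^^ k = ad (mpow x k)"
proof (induction k)
  case 0 show ?case by (auto simp: ad_def fun_eq_iff minv_one)
next
  case (Suc k) show ?case using Suc
    by (auto simp: fun_eq_iff ad_comp assms mpow_invertible)
qed



lemma det_scale: "det (t *\<^sub>R (A::'n::finite mat)) = t ^ CARD('n) * det A"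
proof -
  have "t *\<^sub>R A = (t *\<^sub>R mat 1) ** A" by (simp add: scalar_matrix_assoc[symmetric])
  moreover have "det (t *\<^sub>R (mat 1::'n mat)) = t ^ CARD('n)"
    by (subst det_diagonal) (auto simp: mat_def)
  ultimately show ?thesis by (simp add: det_mul)
qed

lemma kernel_of_det0: assumes "det (A::'n::finite mat) = 0" shows "\<exists>v. v \<noteq> 0 \<and> A *v v = 0"
proof -
  have "\<not> invertible A" using assms invertible_det_nz by blast
  hence "\<not> (\<exists>B. (B::'n mat) ** A = mat 1)" using invertible_left_inverse by blast
  thus ?thesis using matrix_left_invertible_ker by blast
qed

lemma cont_det_line: "continuous_on S (\<lambda>t::real. det (A + t *\<^sub>R (B::'n::finite mat)))"
  unfolding det_def by (intro continuous_intros)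

lemma odd_eig: assumes "odd CARD('n)"
  shows "\<exists>l v. v \<noteq> 0 \<and> (c::'n::finite mat) *v v = l *\<^sub>R v"
proof -
  define q where "q s = det (mat 1 + s *\<^sub>R (- c))" for s
  define p where "p t = det (- c + t *\<^sub>R mat 1)" for t
  have pq: "p t = t ^ CARD('n) * q (1/t)" if "t \<noteq> 0" for t
  proof -
    have "- c + t *\<^sub>R mat 1 = t *\<^sub>R (mat 1 + (1/t) *\<^sub>R (- c))" using that
      by (simp add: algebra_simps)
    thus ?thesis unfolding p_def q_def by (simp add: det_scale)
  qed
  have "continuous_on UNIV q" unfolding q_def by (rule cont_det_line)
  hence "(q \<longlongrightarrow> q 0) (at 0)" by (simp add: continuous_on_def)
  moreover have "q 0 = 1" by (simp add: q_def)
  ultimately have "eventually (\<lambda>s. q s > 0) (at 0)"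
    by (metis order_tendstoD(1) zero_less_one)
  then obtain d where d: "d > 0" "\<And>s. s \<noteq> 0 \<Longrightarrow> dist s 0 < d \<Longrightarrow> q s > 0"
    unfolding eventually_at by blast
  define t1 where "t1 = 2 / d"
  have t1: "t1 > 0" using d by (simp add: t1_def)
  have "q (1/t1) > 0" using d by (intro d(2)) (auto simp: t1_def)
  hence p1: "p t1 > 0" using pq[of t1] t1 by simp
  have "q (1/(-t1)) > 0" using d by (intro d(2)) (auto simp: t1_def)
  moreover have "(-t1) ^ CARD('n) < 0" using assms t1 by (simp add: power_odd_eq)
  ultimately have p2: "p (-t1) < 0" using pq[of "-t1"] t1 by (simp add: mult_neg_pos)
  have "continuous_on {-t1..t1} p" unfolding p_def by (rule cont_det_line)
  then obtain l where "p l = 0" using IVT'[of p "-t1" 0 t1] p1 p2 t1 by force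
  then obtain v where "v \<noteq> 0" "(- c + l *\<^sub>R mat 1) *v v = 0"
    using kernel_of_det0 unfolding p_def by blast
  moreover have "(- c + l *\<^sub>R mat 1) *v v = l *\<^sub>R v - c *v v"
  proof -
    have 1: "(l *\<^sub>R mat 1) *v v = l *\<^sub>R v" by (metis scaleR_matrix_vector_assoc matrix_vector_mul_lid)
    have 2: "(-c) *v v = - (c *v v)" by (simp add: matrix_vector_mult_def vec_eq_iff sum_negf)
    show ?thesis by (simp only: matrix_vector_mult_add_rdistrib 1 2) simp
  qed
  ultimately show ?thesis by (metis eq_iff_diff_eq_0)
qed



lemma gen_inv: assumes "\<And>s. s \<in> S \<Longrightarrow> invertible s" shows "x \<in> gen_group S \<Longrightarrow> invertible (x::'n::finite mat)"
  by (induction x rule: gen_group.induct) (auto intro: invertible_mult minv_invertible simp: inv_one assms)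

lemma gen_det: assumes "\<And>s. s \<in> S \<Longrightarrow> invertible s \<and> \<bar>det s\<bar> = 1" shows "x \<in> gen_group S
   \<Longrightarrow> \<bar>det (x::'n::finite mat)\<bar> = 1"
proof (induction x rule: gen_group.induct)
  case (inv x)
  hence "invertible x" using gen_inv assms by blast
  thus ?case using inv by (simp add: det_minv abs_divide)
qed (auto simp: det_mul abs_mult assms)

lemma abs_pow_eq: assumes "(a::real) > 0" "a ^ i = a ^ j" "i \<noteq> j" shows "a = 1"
proof (rule ccontr)
  assume "a \<noteq> 1"
  show False
  proof (cases "a > 1")
    case True thus False using power_inject_exp[OF True] assms by blast
  next
    case False
    hence "1 < 1/a" using assms \<open>a\<noteq>1\<close> by (simp add: field_simps)
    moreover have "(1/a)^i = (1/a)^j" using assms by (simp add: power_one_over)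
    ultimately show False using power_inject_exp assms by blast
  qed
qed

lemma group_det: assumes "finite_matrix_group G" "g \<in> G" shows "\<bar>det (g::'n::finite mat)\<bar> = 1"
proof -
  have fin: "finite G" "mat 1 \<in> G" "\<And>x y. x\<in>G \<Longrightarrow> y\<in>G \<Longrightarrow> x ** y \<in> G" "invertible g"
    using assms unfolding finite_matrix_group_def by auto
  have "mpow g k \<in> G" for k by (induction k) (auto simp: fin assms)
  hence "range (mpow g) \<subseteq> G" by auto
  hence "\<not> inj (mpow g)" using fin(1) finite_imageD finite_subset infinite_UNIV_nat by blast
  then obtain i j where ij: "i \<noteq> j" "mpow g i = mpow g j" unfolding inj_def by blast
  have "\<bar>det g\<bar> ^ i = \<bar>det g\<bar> ^ j" using arg_cong[OF ij(2), of det] by (simp add: det_mpow power_abs[symmetric])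
  moreover have "\<bar>det g\<bar> > 0" using fin(4) invertible_det_nz by auto
  ultimately show ?thesis using abs_pow_eq ij(1) by blast
qed

lemma schur: assumes "odd CARD('n)" "irreducible_module G" "\<And>y. y \<in> G \<Longrightarrow> y ** c = c ** y"
  shows "\<exists>l. (c::'n::finite mat) = l *\<^sub>R mat 1"
proof -
  obtain l v where lv: "v \<noteq> 0" "c *v v = l *\<^sub>R v" using odd_eig[OF assms(1)] by blast
  define W where "W = {w. c *v w = l *\<^sub>R w}"
  have "subspace W" unfolding W_def subspace_def
    by (auto simp: matrix_vector_right_distrib matrix_vector_mult_scaleR algebra_simps)
  moreover have "\<forall>g\<in>G. \<forall>w\<in>W. g *v w \<in> W"
  proof (intro ballI)
    fix g w assume "g \<in> G" "w \<in> W"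
    have "c *v (g *v w) = g *v (c *v w)" using assms(3)[OF \<open>g\<in>G\<close>] by (simp add: matrix_vector_mul_assoc)
    thus "g *v w \<in> W" using \<open>w\<in>W\<close> unfolding W_def by (simp add: matrix_vector_mult_scaleR)
  qed
  ultimately have "W = {0} \<or> W = UNIV" using assms(2) unfolding irreducible_module_def by blast
  moreover have "v \<in> W" using lv by (simp add: W_def)
  ultimately have "W = UNIV" using lv by auto
  hence "\<forall>x. c *v x = (l *\<^sub>R mat 1) *v x" unfolding W_def
    by (auto simp: scaleR_matrix_vector_assoc[symmetric])
  thus ?thesis using matrix_eq by blast
qed



lemma minv_cancel: assumes "invertible (b::'n::finite mat)"
  shows "matrix_inv b ** (b ** Z) = Z" "b ** (matrix_inv b ** Z) = Z"
  by (simp_all add: matrix_mul_assoc minv[OF assms])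

lemma neg_mm: "(- mat 1) ** (A::'n::finite mat) = - A"
  by (simp add: matrix_matrix_mult_def vec_eq_iff sum_negf mat_def if_distrib if_distribR cong del: if_weak_cong)

lemma neg_mv: "(- (A::'n::finite mat)) *v v = - (A *v v)"
  by (simp add: matrix_vector_mult_def vec_eq_iff sum_negf)

lemma grpA'_sub: "grpA' G n \<subseteq> grpA G n" unfolding grpA'_def by auto

lemma A_props: assumes "finite_matrix_group G" "invertible n" "\<bar>det n\<bar> = 1" "a \<in> grpA G n"
  shows "invertible (a::'n::finite mat)" "\<bar>det a\<bar> = 1"
proof -
  have "\<And>s. s \<in> insert n G \<Longrightarrow> invertible s \<and> \<bar>det s\<bar> = 1"
    using assms group_det unfolding finite_matrix_group_def by auto
  thus "invertible a" "\<bar>det a\<bar> = 1" using gen_inv gen_det assms(4) unfolding grpA_def by blast+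
qed

lemma uniq:
  assumes odd: "odd CARD('n)" and fg: "finite_matrix_group G" and irr: "irreducible_module G"
    and invn: "invertible n" and dn: "\<bar>det n\<bar> = 1"
    and a: "a \<in> grpA' G n" and b: "b \<in> grpA' G n" and eq: "\<forall>y\<in>G. ad a y = ad b y"
  shows "a = (b::'n::finite mat)"
proof -
  have aA: "a \<in> grpA G n" and bA: "b \<in> grpA G n" using a b grpA'_sub by auto
  note AP = A_props[OF fg invn dn]
  have ia: "invertible a" and ib: "invertible b" using AP aA bA by auto
  define c where "c = matrix_inv b ** a"
  have cA: "c \<in> grpA G n" unfolding c_def grpA_def
    using aA bA unfolding grpA_def by (intro gen_group.mult gen_group.inv)
  have comm: "y ** c = c ** y" if "y \<in> G" for y
  proof -
    have e: "a ** y ** matrix_inv a = b ** y ** matrix_inv b" using eq that unfolding ad_def by auto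
    have "c ** y = matrix_inv b ** (a ** y ** matrix_inv a) ** a"
      unfolding c_def by (simp add: matrix_mul_assoc[symmetric] minv[OF ia])
    also have "\<dots> = matrix_inv b ** (b ** y ** matrix_inv b) ** a" using e by simp
    also have "\<dots> = y ** c" unfolding c_def by (simp add: matrix_mul_assoc[symmetric] minv_cancel[OF ib])
    finally show ?thesis by simp
  qed
  obtain l where l: "c = l *\<^sub>R mat 1" using schur[OF odd irr comm] by blast
  have "\<bar>det c\<bar> = 1" using AP cA by auto
  hence "\<bar>l\<bar> ^ CARD('n) = 1 ^ CARD('n)" using l det_scale[of l "mat 1::'n mat"] by (simp add: power_abs)
  hence "\<bar>l\<bar> = 1" by (rule power_eq_imp_eq_base) auto
  hence "l = 1 \<or> l = -1" by auto
  thus ?thesis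
  proof
    assume "l = 1"
    hence "c = mat 1" using l by simp
    hence "b ** c = b" by simp
    thus ?thesis unfolding c_def using minv_cancel(2)[OF ib, of a] by simp
  next
    assume "l = -1"
    hence c1: "c = - mat 1" using l by simp
    hence "- mat 1 \<in> grpA G n" using cA by simp
    hence "det a = 1" "det b = 1" using a b unfolding grpA'_def by auto
    hence "det c = 1" unfolding c_def by (simp add: det_mul det_minv ib)
    moreover have "det c = (-1) ^ CARD('n)" using det_scale[of "-1" "mat 1::'n mat"] c1 by simp
    ultimately show ?thesis using odd by simp
  qed
qed

lemma trace_sum: "trace (\<Sum>k\<in>K. f k) = (\<Sum>k\<in>K. trace (f k :: 'n::finite mat))"
  unfolding trace_def by (simp add: sum.swap[of _ K])

lemma trace_scale: "trace (r *\<^sub>R (A::'n::finite mat)) = r * trace A"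
  unfolding trace_def by (simp add: sum_distrib_left)

lemma mul_sum: "(x::'n::finite mat) ** (\<Sum>k<(m::nat). f k) = (\<Sum>k<m. x ** f k)"
  by (induction m) (auto simp: matrix_add_ldistrib)

lemma shift_sum: "f m = f 0 \<Longrightarrow> (\<Sum>i<m. f (Suc i)) = (\<Sum>i<m. (f i :: 'a::ab_group_add))"
  using sum.lessThan_Suc_shift[of f m] sum.lessThan_Suc[of f m] by (simp add: add.commute)

lemma nonzero_mat: assumes "trace (P::'n::finite mat) \<noteq> 0" shows "\<exists>v. P *v v \<noteq> 0"
proof (rule ccontr)
  assume "\<not> ?thesis"
  hence "P = 0" using matrix_eq[of P 0] by simp
  thus False using assms by (simp add: trace_def)
qed



lemma ad_inj: assumes "invertible (a::'n::finite mat)" "ad a y = ad a z" shows "y = z"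
proof -
  have e: "matrix_inv a ** ad a w ** a = w" for w unfolding ad_def
    by (simp add: matrix_mul_assoc[symmetric] minv_cancel[OF assms(1)] minv[OF assms(1)])
  have "y = matrix_inv a ** ad a y ** a" using e[of y] by simp
  also have "\<dots> = matrix_inv a ** ad a z ** a" using assms(2) by simp
  also have "\<dots> = z" by (rule e)
  finally show ?thesis .
qed

theorem proposition2:
  fixes G :: "'n::finite mat set" and n :: "'n mat"
  assumes "odd CARD('n)"
    and "finite_matrix_group G"
    and "irreducible_module G" and "\<not> trivial_module G"
    and "- mat 1 \<notin> G"
    and "invertible n" and "(\<lambda>y. ad n y) ` G = G"
    and "\<exists>k>0. mpow n k = mat 1"
    and "\<exists>g\<in>G. (let \<alpha> = ad g \<circ> ad n; m = aut_order G \<alpha> in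
           even m
           \<and> (1 / real m) * (\<Sum>k<m. chi' G n (\<alpha> ^^ k)) > 0
           \<and> (1 / real m) * (\<Sum>k<m. chi' G n (\<alpha> ^^ k) * (-1) ^ k) > 0)"
  shows "E1_property G n"
proof -
  note odd = assms(1) and fg = assms(2) and irr = assms(3) and invn = assms(6)
  have fgp: "finite G" "mat 1 \<in> G" "\<And>x y. x\<in>G \<Longrightarrow> y\<in>G \<Longrightarrow> x ** y \<in> G"
    "\<And>x. x \<in> G \<Longrightarrow> invertible x" "\<And>x. x \<in> G \<Longrightarrow> matrix_inv x \<in> G"
    using fg unfolding finite_matrix_group_def by auto
  obtain k0 where k0: "k0 > 0" "mpow n k0 = mat 1" using assms(8) by blast
  have "\<bar>det n\<bar> ^ k0 = 1 ^ k0" using arg_cong[OF k0(2), of det] by (simp add: det_mpow power_abs[symmetric])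
  hence dn: "\<bar>det n\<bar> = 1" by (rule power_eq_imp_eq_base) (use k0 in auto)
  note AP = A_props[OF fg invn dn]
  note UQ = uniq[OF odd fg irr invn dn]
  obtain g where gG: "g \<in> G" and hyp: "let \<alpha> = ad g \<circ> ad n; m = aut_order G \<alpha> in
           even m
           \<and> (1 / real m) * (\<Sum>k<m. chi' G n (\<alpha> ^^ k)) > 0
           \<and> (1 / real m) * (\<Sum>k<m. chi' G n (\<alpha> ^^ k) * (-1) ^ k) > 0" using assms(9) by blast
  define \<alpha> where "\<alpha> = ad g \<circ> ad n"
  define m where "m = aut_order G \<alpha>"
  have hyp: "even m" "(1 / real m) * (\<Sum>k<m. chi' G n (\<alpha> ^^ k)) > 0"
    "(1 / real m) * (\<Sum>k<m. chi' G n (\<alpha> ^^ k) * (-1) ^ k) > 0"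
    using hyp unfolding Let_def \<alpha>_def m_def by auto
  have ig: "invertible g" using fgp gG by auto
  define h where "h = g ** n"
  have ih: "invertible h" unfolding h_def using ig invn by (rule invertible_mult)
  have hA: "h \<in> grpA G n" unfolding h_def grpA_def using gG by (intro gen_group.mult gen_group.gen) auto
  have dh: "\<bar>det h\<bar> = 1" using AP hA by auto
  have alpha_h: "\<alpha> = ad h" unfolding \<alpha>_def h_def by (auto simp: fun_eq_iff ad_comp ig invn)
  define x where "x = (if - mat 1 \<in> grpA G n \<and> det h \<noteq> 1 then - h else h)"
  have ix: "invertible x"
  proof -
    have "- h = (-1::real) *\<^sub>R h" by simp
    thus ?thesis unfolding x_def using scalar_invertible[OF _ ih, of "-1"] ih by auto
  qed
  have alpha_x: "\<alpha> = ad x" unfolding x_def alpha_h using ad_neg[OF ih] by auto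
  have alpha_pow: "\<alpha> ^^ k = ad (mpow x k)" for k unfolding alpha_x by (rule funpow_ad[OF ix])
  have xA: "x \<in> grpA G n"
  proof (cases "- mat 1 \<in> grpA G n \<and> det h \<noteq> 1")
    case True
    hence "(- mat 1) ** h \<in> grpA G n" using hA unfolding grpA_def by (intro gen_group.mult) auto
    thus ?thesis using True neg_mm[of h] unfolding x_def by simp
  next
    case False thus ?thesis using hA unfolding x_def by auto
  qed
  have xkA: "mpow x k \<in> grpA G n" for k
  proof (induction k)
    case 0 show ?case unfolding grpA_def by (simp add: gen_group.one)
  next
    case (Suc k) thus ?case using xA unfolding grpA_def by (simp add: gen_group.mult)
  qed
  have xk: "mpow x k \<in> grpA' G n" for k
  proof (cases "- mat 1 \<in> grpA G n")
    case False thus ?thesis using xkA unfolding grpA'_def by auto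
  next
    case True
    have "det x = 1"
    proof (cases "det h = 1")
      case True thus ?thesis by (simp add: x_def)
    next
      case False
      hence "det h = -1" using dh by auto
      moreover have "det (-h) = (-1)^CARD('n) * det h" using det_scale[of "-1" h] by simp
      ultimately show ?thesis using \<open>- mat 1 \<in> grpA G n\<close> False odd
        unfolding x_def by simp
    qed
    thus ?thesis using True xkA unfolding grpA'_def by (simp add: det_mpow)
  qed
  have chi: "chi' G n (\<alpha> ^^ k) = trace (mpow x k)" for k
  proof -
    have "(THE a. a \<in> grpA' G n \<and> (\<forall>y\<in>G. ad a y = (\<alpha> ^^ k) y)) = mpow x k"
    proof (rule the1_equality)
      show "\<exists>!a. a \<in> grpA' G n \<and> (\<forall>y\<in>G. ad a y = (\<alpha> ^^ k) y)"
      proof (rule ex1I[of _ "mpow x k"])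
        show "mpow x k \<in> grpA' G n \<and> (\<forall>y\<in>G. ad (mpow x k) y = (\<alpha> ^^ k) y)"
          using xk alpha_pow by auto
        fix b assume "b \<in> grpA' G n \<and> (\<forall>y\<in>G. ad b y = (\<alpha> ^^ k) y)"
        thus "b = mpow x k" using UQ[of b "mpow x k"] xk[of k] unfolding alpha_pow by auto
      qed
      show "mpow x k \<in> grpA' G n \<and> (\<forall>y\<in>G. ad (mpow x k) y = (\<alpha> ^^ k) y)"
        using xk alpha_pow by auto
    qed
    thus ?thesis unfolding chi'_def by simp
  qed
  have alphaG: "\<alpha> y \<in> G" if "y \<in> G" for y
  proof -
    have "ad n y \<in> G" using assms(7) that by auto
    thus ?thesis unfolding \<alpha>_def ad_def using gG fgp by auto
  qed
  have alphakG: "(\<alpha> ^^ k) y \<in> G" if "y \<in> G" for y k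
    by (induction k) (auto simp: that alphaG)
  define F where "F k = restrict (\<alpha> ^^ k) G" for k
  have "range F \<subseteq> G \<rightarrow>\<^sub>E G" unfolding F_def using alphakG by auto
  moreover have "finite (G \<rightarrow>\<^sub>E G)" using fgp(1) by (intro finite_PiE) auto
  ultimately have "\<not> inj F" using finite_imageD finite_subset infinite_UNIV_nat by blast
  then obtain i j where ij: "i \<noteq> j" "F i = F j" unfolding inj_def by blast
  have exK: "\<exists>K>0. \<forall>y\<in>G. (\<alpha> ^^ K) y = y" if "i < j" "F i = F j" for i j
  proof (intro exI[of _ "j - i"] conjI ballI)
    show "j - i > 0" using that by simp
    fix y assume "y \<in> G"
    have "(\<alpha> ^^ i) ((\<alpha> ^^ (j - i)) y) = (\<alpha> ^^ j) y"
    proof -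
      have "j = i + (j - i)" using that by simp
      hence "\<alpha> ^^ j = \<alpha> ^^ i \<circ> \<alpha> ^^ (j - i)" by (metis funpow_add)
      thus ?thesis by simp
    qed
    also have "\<dots> = (\<alpha> ^^ i) y"
    proof -
      have "F j y = F i y" using that by simp
      thus ?thesis using \<open>y\<in>G\<close> by (simp add: F_def)
    qed
    finally show "(\<alpha> ^^ (j - i)) y = y" unfolding alpha_pow
      using ad_inj[OF mpow_invertible[OF ix]] by blast
  qed
  have "\<exists>K>0. \<forall>y\<in>G. (\<alpha> ^^ K) y = y"
  proof (cases "i < j")
    case True thus ?thesis using exK ij by blast
  next
    case False thus ?thesis using exK[of j i] ij by auto
  qed
  hence mprop: "m > 0 \<and> (\<forall>y\<in>G. (\<alpha> ^^ m) y = y)"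
    unfolding m_def aut_order_def by (rule LeastI_ex)
  have m0: "m > 0" using mprop by auto
  have "mpow x m = mat 1"
  proof (rule UQ)
    show "mpow x m \<in> grpA' G n" by (rule xk)
    have "mat 1 \<in> grpA G n" unfolding grpA_def by (rule gen_group.one)
    thus "mat 1 \<in> grpA' G n" unfolding grpA'_def by auto
    show "\<forall>y\<in>G. ad (mpow x m) y = ad (mat 1) y"
      using mprop unfolding alpha_pow by (auto simp: ad_def minv_one)
  qed
  hence xm: "mpow x m = mpow x 0" by simp
  define P where "P = (\<Sum>k<m. mpow x k)"
  have "(\<Sum>k<m. chi' G n (\<alpha> ^^ k)) > 0" using hyp(2) m0 by (simp add: zero_less_divide_iff)
  hence "trace P \<noteq> 0" unfolding P_def trace_sum chi by simp
  then obtain v where v: "P *v v \<noteq> 0" using nonzero_mat by blast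
  have "x ** P = P" unfolding P_def mul_sum using shift_sum[of "mpow x" m] xm by simp
  hence fix1: "x *v (P *v v) = P *v v" by (simp add: matrix_vector_mul_assoc)
  define Q where "Q = (\<Sum>k<m. (-1::real) ^ k *\<^sub>R mpow x k)"
  have "(\<Sum>k<m. chi' G n (\<alpha> ^^ k) * (-1) ^ k) > 0" using hyp(3) m0 by (simp add: zero_less_divide_iff)
  hence "trace Q \<noteq> 0" unfolding Q_def trace_sum chi trace_scale by (simp add: mult.commute)
  then obtain u where u: "Q *v u \<noteq> 0" using nonzero_mat by blast
  have "x ** Q = (\<Sum>k<m. (-1::real) ^ k *\<^sub>R (x ** mpow x k))"
    unfolding Q_def mul_sum by (simp add: matrix_scalar_ac scalar_matrix_assoc[symmetric])
  also have "\<dots> = (\<Sum>k<m. - ((-1::real) ^ (Suc k) *\<^sub>R mpow x (Suc k)))"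
    by simp
  also have "\<dots> = - Q" unfolding Q_def sum_negf
    using shift_sum[of "\<lambda>k. (-1::real) ^ k *\<^sub>R mpow x k" m] xm hyp(1) by simp
  finally have fix2: "x *v (Q *v u) = - (Q *v u)" by (simp add: matrix_vector_mul_assoc neg_mv)
  show ?thesis
  proof (cases "x = h")
    case True thus ?thesis unfolding E1_property_def h_def using gG v fix1 by blast
  next
    case False
    hence "x = - h" unfolding x_def by auto
    hence "h *v (Q *v u) = Q *v u" using fix2 by (simp add: neg_mv)
    thus ?thesis unfolding E1_property_def h_def using gG u by blast
  qed
qed


end
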